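(* Let $k\ge 2$ and $n$ be integers with $2k-1 \le n$. Then $$N(CM,k,n)\le\begin{cases} n-k+1 & \text{if } k \text{ is even},\\ (n-k+1)\cdot\bigl(1+\mathsf{d}(k-1,n)\bigr) & \text{if } k \text{ is odd.}\end{cases}$$
   Context: We are given $n$ balls, the set $[n]=\{1,\dots,n\}$, each colored with one of two colors by an unknown coloring. A ball $i$ is a majority ball if more than $n/2$ balls have the same color as $i$. A query is a subset $Q\subseteq[n]$ with $|Q|=k$. In the Counting Model (CM), the answer to a query $Q$ is the number $i\le k/2$ such that $Q$ contains exactly $i$ balls of one of the colors (and $k-i$ of the other); no indication of which color is given. A non-adaptive strategy is a family of queries $Q_1,\dots,Q_q$ fixed in advance. It succeeds if for every coloring, the answers determine the outcome: either every coloring consistent with the answers has no majority ball, or there is a ball that is a majority ball in every coloring consistent with the answers. $N(CM,k,n)$ is the minimum number of queries in a successful non-adaptive strategy. A 2-coloring of a $k$-element set is balanced if the sizes of the two color classes differ by at most one. A hypergraph has Property C if its vertices can be 2-colored so that every edge is balanced. For $k\ge 2$, $\mathsf{d}(k,n)$ denotes the minimum number of edges of a $k$-uniform hypergraph on $n$ vertices that does not have Property C. *)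

theory Defs
  imports Main
begin

(* Balls are [n] = {1..n}; a coloring is c :: nat => bool (only values on {1..n} matter). *)

definition cm_answer :: "(nat \<Rightarrow> bool) \<Rightarrow> nat set \<Rightarrow> nat" where
  "cm_answer c Q = min (card {j\<in>Q. c j}) (card {j\<in>Q. \<not> c j})"

definition majority_ball :: "nat \<Rightarrow> (nat \<Rightarrow> bool) \<Rightarrow> nat \<Rightarrow> bool" where
  "majority_ball n c i \<longleftrightarrow> i \<in> {1..n} \<and> 2 * card {j\<in>{1..n}. c j = c i} > n"

definition cm_consistent :: "nat set list \<Rightarrow> (nat \<Rightarrow> bool) \<Rightarrow> (nat \<Rightarrow> bool) \<Rightarrow> bool" where
  "cm_consistent Qs c c' \<longleftrightarrow> (\<forall>Q\<in>set Qs. cm_answer c' Q = cm_answer c Q)"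

definition cm_succeeds :: "nat \<Rightarrow> nat set list \<Rightarrow> bool" where
  "cm_succeeds n Qs \<longleftrightarrow>
     (\<forall>c. (\<forall>c'. cm_consistent Qs c c' \<longrightarrow> \<not> (\<exists>i. majority_ball n c' i))
        \<or> (\<exists>i\<in>{1..n}. \<forall>c'. cm_consistent Qs c c' \<longrightarrow> majority_ball n c' i))"

definition N_CM :: "nat \<Rightarrow> nat \<Rightarrow> nat" where
  "N_CM k n = (LEAST q. \<exists>Qs. length Qs = q \<and> (\<forall>Q\<in>set Qs. Q \<subseteq> {1..n} \<and> card Q = k)
                              \<and> cm_succeeds n Qs)"

definition balanced_on :: "(nat \<Rightarrow> bool) \<Rightarrow> nat set \<Rightarrow> bool" where
  "balanced_on c e \<longleftrightarrow>
     card {j\<in>e. c j} \<le> card {j\<in>e. \<not> c j} + 1 \<and> card {j\<in>e. \<not> c j} \<le> card {j\<in>e. c j} + 1"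

definition property_C :: "nat set set \<Rightarrow> bool" where
  "property_C E \<longleftrightarrow> (\<exists>c. \<forall>e\<in>E. balanced_on c e)"

definition dC :: "nat \<Rightarrow> nat \<Rightarrow> nat" where
  "dC k n = (LEAST m. \<exists>E. E \<subseteq> {e. e \<subseteq> {1..n} \<and> card e = k} \<and> card E = m \<and> \<not> property_C E)"

end

theory Submission
  imports Defs
begin

definition strict :: "(nat \<Rightarrow> bool) \<Rightarrow> nat set \<Rightarrow> bool" where
  "strict c A \<longleftrightarrow> card {j\<in>A. c j} \<noteq> card {j\<in>A. \<not> c j}"

definition qs_of :: "nat \<Rightarrow> nat set list \<Rightarrow> nat set list" where
  "qs_of n F = concat (map (\<lambda>A. map (\<lambda>y. insert y A) (sorted_list_of_set ({1..n} - A))) F)"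

lemma qs_of_mem: "Q \<in> set (qs_of n F) \<longleftrightarrow> (\<exists>A\<in>set F. \<exists>y\<in>{1..n} - A. Q = insert y A)"
  unfolding qs_of_def by auto

lemma qs_of_length: "length (qs_of n F) = (\<Sum>A\<leftarrow>F. card ({1..n} - A))"
  unfolding qs_of_def by (simp add: length_concat comp_def)

lemma card_insert_filter:
  "finite A \<Longrightarrow> y \<notin> A \<Longrightarrow> card {j \<in> insert y A. P j} = card {j\<in>A. P j} + (if P y then 1 else 0)"
proof -
  assume "finite A" "y \<notin> A"
  have "{j \<in> insert y A. P j} = (if P y then insert y {j\<in>A. P j} else {j\<in>A. P j})" by auto
  then show ?thesis using \<open>finite A\<close> \<open>y \<notin> A\<close> by auto
qed

lemma ans_insert:
  "finite A \<Longrightarrow> y \<notin> A \<Longrightarrow> cm_answer c (insert y A) =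
     min (card {j\<in>A. c j} + (if c y then 1 else 0)) (card {j\<in>A. \<not> c j} + (if c y then 0 else 1))"
  unfolding cm_answer_def using card_insert_filter[of A y c] card_insert_filter[of A y "\<lambda>j. \<not> c j"]
  by simp

lemma card_split: "finite A \<Longrightarrow> card {j\<in>A. c j} + card {j\<in>A. \<not> c j} = card A"
proof -
  assume f: "finite A"
  have "A = {j\<in>A. c j} \<union> {j\<in>A. \<not> c j}" by auto
  then have "card A = card ({j\<in>A. c j} \<union> {j\<in>A. \<not> c j})" by simp
  also have "\<dots> = card {j\<in>A. c j} + card {j\<in>A. \<not> c j}"
    by (rule card_Un_disjoint) (use f in auto)
  finally show ?thesis by simp
qed

lemma card_part: "(A::nat set) \<subseteq> {1..n} \<Longrightarrow> card {j\<in>{1..n}. P j} = card {j\<in>A. P j} + card {j\<in>{1..n}-A. P j}"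
proof -
  assume s: "A \<subseteq> {1..n}"
  have "{j\<in>{1..n}. P j} = {j\<in>A. P j} \<union> {j\<in>{1..n}-A. P j}" using s by auto
  then have "card {j\<in>{1..n}. P j} = card ({j\<in>A. P j} \<union> {j\<in>{1..n}-A. P j})" by simp
  also have "\<dots> = card {j\<in>A. P j} + card {j\<in>{1..n}-A. P j}"
  proof (rule card_Un_disjoint)
    show "finite {j\<in>A. P j}" 
    proof -
      have "finite A" by (rule finite_subset[OF s]) simp
      then show ?thesis by simp
    qed
    show "finite {j\<in>{1..n}-A. P j}" by simp
  qed auto
  finally show ?thesis .
qed

lemma flip_ans: "cm_answer (\<lambda>j. \<not> c j) Q = cm_answer c Q"
  unfolding cm_answer_def by (simp add: min.commute)

lemma flip_maj: "majority_ball n (\<lambda>j. \<not> c j) i = majority_ball n c i"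
  unfolding majority_ball_def by simp

lemma flip_strict: "strict (\<lambda>j. \<not> c j) A = strict c A"
  unfolding strict_def by auto

lemma L_core:
  assumes s: "A \<subseteq> {1..n}" and sz: "2 * card A < n"
    and st: "strict c A" "strict c' A"
    and ans: "\<forall>y\<in>{1..n}-A. cm_answer c (insert y A) = cm_answer c' (insert y A)"
    and x: "x \<in> {1..n}-A" and cx: "c x" and cx': "c' x"
    and maj: "majority_ball n c x"
  shows "majority_ball n c' x"
proof -
  have fA: "finite A" using s finite_subset by blast
  define a where "a = card {j\<in>A. c j}"
  define b where "b = card {j\<in>A. \<not> c j}"
  define a' where "a' = card {j\<in>A. c' j}"
  define b' where "b' = card {j\<in>A. \<not> c' j}"
  have ab: "a + b = card A" "a' + b' = card A" unfolding a_def b_def a'_def b'_def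
    using card_split[OF fA] by auto
  have sa: "a \<noteq> b" "a' \<noteq> b'" using st unfolding strict_def a_def b_def a'_def b'_def by auto
  have e: "min (a + (if c y then 1 else 0)) (b + (if c y then 0 else 1))
         = min (a' + (if c' y then 1 else 0)) (b' + (if c' y then 0 else 1))" if "y \<in> {1..n}-A" for y
    using ans that ans_insert[OF fA, of y c] ans_insert[OF fA, of y c'] unfolding a_def b_def a'_def b'_def
    by auto
  have hx: "min (a+1) b = min (a'+1) b'" using e[OF x] cx cx' by simp
  have YY: "c y = c' y" if "y \<in> {1..n}-A" for y
    using e[OF that] hx sa by (cases "c y"; cases "c' y") (auto simp: min_def split: if_splits)
  define Y where "Y = {j\<in>{1..n}-A. c j}"
  have Y': "{j\<in>{1..n}-A. c' j} = Y" unfolding Y_def using YY by auto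
  have m1: "2 * (a + card Y) > n"
    using maj cx card_part[OF s, of c] unfolding majority_ball_def a_def Y_def by simp
  have "2 * (a' + card Y) > n"
  proof (cases "a = a'")
    case True then show ?thesis using m1 by simp
  next
    case False
    have allt: "c z" if z: "z \<in> {1..n}-A" for z
    proof (rule ccontr)
      assume "\<not> c z"
      then have "\<not> c' z" using YY z by simp
      then have "min a (b+1) = min a' (b'+1)" using e[OF z] \<open>\<not> c z\<close> by simp
      then show False using hx sa ab False by (auto simp: min_def split: if_splits)
    qed
    have "Y = {1..n} - A" unfolding Y_def using allt by auto
    then have "card Y = n - card A" using fA s by (simp add: card_Diff_subset)
    then show ?thesis using sz by simp
  qed
  then show ?thesis
    using x cx' card_part[OF s, of c'] Y' unfolding majority_ball_def a'_def by simp
qed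


lemma L:
  assumes s: "A \<subseteq> {1..n}" and sz: "2 * card A < n"
    and st: "strict c A" "strict c' A"
    and ans: "\<forall>y\<in>{1..n}-A. cm_answer c (insert y A) = cm_answer c' (insert y A)"
    and x: "x \<in> {1..n}-A"
    and maj: "majority_ball n c x"
  shows "majority_ball n c' x"
proof -
  define d where "d = (if c x then c else (\<lambda>j. \<not> c j))"
  define d' where "d' = (if c' x then c' else (\<lambda>j. \<not> c' j))"
  have "majority_ball n d' x"
  proof (rule L_core[OF s sz _ _ _ x])
    show "strict d A" "strict d' A" using st flip_strict unfolding d_def d'_def by auto
    show "\<forall>y\<in>{1..n}-A. cm_answer d (insert y A) = cm_answer d' (insert y A)"
      using ans flip_ans unfolding d_def d'_def by auto
    show "d x" "d' x" unfolding d_def d'_def by auto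
    show "majority_ball n d x" using maj flip_maj unfolding d_def by auto
  qed
  then show ?thesis using flip_maj unfolding d'_def by (auto split: if_splits)
qed

lemma maj_outside:
  assumes s: "A \<subseteq> {1..n}" and sz: "2 * card A < n" and m: "majority_ball n c j"
  shows "\<exists>x\<in>{1..n}-A. majority_ball n c x"
proof -
  define C where "C = {i\<in>{1..n}. c i = c j}"
  have "2 * card C > n" using m unfolding majority_ball_def C_def by simp
  then have "card C > card A" using sz by simp
  have fA: "finite A" by (rule finite_subset[OF s]) simp
  have "\<not> C \<subseteq> A"
  proof
    assume "C \<subseteq> A"
    then have "card C \<le> card A" using card_mono[OF fA] by blast
    then show False using \<open>card C > card A\<close> by simp
  qed
  then obtain x where x: "x \<in> C" "x \<notin> A" by blast
  have "majority_ball n c x" using m x unfolding majority_ball_def C_def by simp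
  then show ?thesis using x unfolding C_def by auto
qed

lemma G:
  assumes F: "\<forall>A\<in>set F. A \<subseteq> {1..n} \<and> 2 * card A < n"
    and H: "\<forall>c. (\<exists>A\<in>set F. \<forall>c'. cm_consistent (qs_of n F) c c' \<longrightarrow> strict c' A)
               \<or> (\<exists>i\<in>{1..n}. \<forall>c'. cm_consistent (qs_of n F) c c' \<longrightarrow> majority_ball n c' i)"
  shows "cm_succeeds n (qs_of n F)"
  unfolding cm_succeeds_def
proof
  fix c
  have cons_ans: "\<forall>y\<in>{1..n}-A. cm_answer c (insert y A) = cm_answer c' (insert y A)"
    if "A \<in> set F" "cm_consistent (qs_of n F) c c'" for A c'
  proof
    fix y assume y: "y \<in> {1..n}-A"
    have "insert y A \<in> set (qs_of n F)" unfolding qs_of_mem using that(1) y by blast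
    then show "cm_answer c (insert y A) = cm_answer c' (insert y A)"
      using that(2) unfolding cm_consistent_def by simp
  qed
  from H[rule_format, of c] show "(\<forall>c'. cm_consistent (qs_of n F) c c' \<longrightarrow> \<not> (\<exists>i. majority_ball n c' i))
        \<or> (\<exists>i\<in>{1..n}. \<forall>c'. cm_consistent (qs_of n F) c c' \<longrightarrow> majority_ball n c' i)"
  proof
    assume "\<exists>A\<in>set F. \<forall>c'. cm_consistent (qs_of n F) c c' \<longrightarrow> strict c' A"
    then obtain A where A: "A \<in> set F" and stA: "\<forall>c'. cm_consistent (qs_of n F) c c' \<longrightarrow> strict c' A" by blast
    have s: "A \<subseteq> {1..n}" and sz: "2 * card A < n" using F A by auto
    have stc: "strict c A" using stA unfolding cm_consistent_def by simp
    show ?thesis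
    proof (cases "\<exists>j. majority_ball n c j")
      case True
      then obtain j where "majority_ball n c j" by blast
      from maj_outside[OF s sz this] obtain x where x: "x \<in> {1..n}-A" "majority_ball n c x" by blast
      have "\<forall>c'. cm_consistent (qs_of n F) c c' \<longrightarrow> majority_ball n c' x"
        using L[OF s sz stc _ _ x(1) x(2)] stA cons_ans[OF A] by blast
      then show ?thesis using x by auto
    next
      case False
      have "\<not> (\<exists>i. majority_ball n c' i)" if cc: "cm_consistent (qs_of n F) c c'" for c'
      proof
        assume "\<exists>i. majority_ball n c' i"
        then obtain j where "majority_ball n c' j" by blast
        from maj_outside[OF s sz this] obtain x where x: "x \<in> {1..n}-A" "majority_ball n c' x" by blast
        have "majority_ball n c x"
          using L[OF s sz stA[rule_format, OF cc] stc _ x(1) x(2)] cons_ans[OF A cc] by auto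
        then show False using False by blast
      qed
      then show ?thesis by blast
    qed
  qed auto
qed


lemma nonstrict_ans:
  assumes "finite A" "card A = 2*h" "\<not> strict c A" "y \<notin> A"
  shows "cm_answer c (insert y A) = h"
  using assms ans_insert[OF assms(1,4), of c] card_split[OF assms(1), of c]
  unfolding strict_def by auto

lemma Odd:
  assumes F: "\<forall>A\<in>set F. A \<subseteq> {1..n} \<and> card A = 2*h" and hn: "4*h < n"
    and ii: "\<exists>i\<in>{1..n}. \<forall>c. (\<forall>A\<in>set F. \<forall>y\<in>{1..n}-A. cm_answer c (insert y A) = h) \<longrightarrow> majority_ball n c i"
  shows "cm_succeeds n (qs_of n F)"
proof (rule G)
  show "\<forall>A\<in>set F. A \<subseteq> {1..n} \<and> 2 * card A < n" using F hn by auto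
  show "\<forall>c. (\<exists>A\<in>set F. \<forall>c'. cm_consistent (qs_of n F) c c' \<longrightarrow> strict c' A)
               \<or> (\<exists>i\<in>{1..n}. \<forall>c'. cm_consistent (qs_of n F) c c' \<longrightarrow> majority_ball n c' i)"
  proof
    fix c
    have cons_ans: "cm_answer c' (insert y A) = cm_answer c (insert y A)"
      if "A \<in> set F" "y \<in> {1..n}-A" "cm_consistent (qs_of n F) c c'" for A c' y
    proof -
      have "insert y A \<in> set (qs_of n F)" unfolding qs_of_mem using that(1,2) by blast
      then show ?thesis using that(3) unfolding cm_consistent_def by simp
    qed
    show "(\<exists>A\<in>set F. \<forall>c'. cm_consistent (qs_of n F) c c' \<longrightarrow> strict c' A)
               \<or> (\<exists>i\<in>{1..n}. \<forall>c'. cm_consistent (qs_of n F) c c' \<longrightarrow> majority_ball n c' i)"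
    proof (cases "\<forall>A\<in>set F. \<forall>y\<in>{1..n}-A. cm_answer c (insert y A) = h")
      case True
      from ii obtain i where i: "i \<in> {1..n}"
        "\<forall>c. (\<forall>A\<in>set F. \<forall>y\<in>{1..n}-A. cm_answer c (insert y A) = h) \<longrightarrow> majority_ball n c i" by blast
      have "majority_ball n c' i" if "cm_consistent (qs_of n F) c c'" for c'
        using i(2) True cons_ans[OF _ _ that] by simp
      then show ?thesis using i(1) by blast
    next
      case False
      then obtain A y where A: "A \<in> set F" "y \<in> {1..n}-A" "cm_answer c (insert y A) \<noteq> h" by blast
      have fA: "finite A" using F A(1) finite_subset[of A "{1..n}"] by auto
      have "strict c' A" if "cm_consistent (qs_of n F) c c'" for c'
        using nonstrict_ans[OF fA, of h c' y] F A cons_ans[OF A(1,2) that] by auto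
      then show ?thesis using A(1) by blast
    qed
  qed
qed

lemma K:
  assumes s: "A \<subseteq> {1..n}" and cA: "card A = 2*h" and lt: "card A < n" and st: "strict c A"
    and ans: "\<forall>y\<in>{1..n}-A. cm_answer c (insert y A) = h"
  shows "\<exists>col. card {j\<in>{1..n}. c j = col} = h+1 \<and> {j\<in>{1..n}. c j = col} \<subseteq> A"
proof -
  have fA: "finite A" by (rule finite_subset[OF s]) simp
  define a where "a = card {j\<in>A. c j}"
  define b where "b = card {j\<in>A. \<not> c j}"
  have ab: "a + b = 2*h" using card_split[OF fA, of c] cA unfolding a_def b_def by simp
  have sa: "a \<noteq> b" using st unfolding strict_def a_def b_def by simp
  have e: "min (a + (if c y then 1 else 0)) (b + (if c y then 0 else 1)) = h" if "y \<in> {1..n}-A" for y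
    using ans that ans_insert[OF fA, of y c] unfolding a_def b_def by auto
  have all: "c y = (a < b)" if "y \<in> {1..n}-A" for y
    using e[OF that] ab sa by (cases "c y") (auto simp: min_def split: if_splits)
  have "{1..n} - A \<noteq> {}"
  proof
    assume "{1..n} - A = {}"
    then have "{1..n} \<subseteq> A" by blast
    then have "card {1..n} \<le> card A" using card_mono[OF fA] by blast
    then show False using lt by simp
  qed
  then obtain y where y: "y \<in> {1..n}-A" by blast
  have vals: "(if b < a then a else b) = h + 1"
    using e[OF y] all[OF y] ab sa by (auto simp: min_def split: if_splits)
  define col where "col = (b < a)"
  have sub: "{j\<in>{1..n}. c j = col} = {j\<in>A. c j = col}"
  proof -
    have "\<forall>y\<in>{1..n}-A. c y \<noteq> col" using all sa unfolding col_def by auto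
    then show ?thesis using s by blast
  qed
  have "card {j\<in>A. c j = col} = (if b < a then a else b)"
    unfolding col_def a_def b_def by (cases "b < a") auto
  then have "card {j\<in>{1..n}. c j = col} = h+1 \<and> {j\<in>{1..n}. c j = col} \<subseteq> A"
    using sub vals by auto
  then show ?thesis by blast
qed

lemma J:
  assumes s: "A \<subseteq> {1..n}" and ans: "\<forall>y\<in>{1..n}-A. cm_answer c (insert y A) = h"
    and lt: "card {j\<in>{1..n}. c j = col} < card ({1..n} - A)"
  shows "h \<le> card ({j\<in>{1..n}. c j = col} \<inter> A)"
proof -
  have fA: "finite A" by (rule finite_subset[OF s]) simp
  define T where "T = {j\<in>{1..n}. c j = col}"
  have "\<not> ({1..n} - A \<subseteq> T)"
  proof
    assume "{1..n} - A \<subseteq> T"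
    then have "card ({1..n} - A) \<le> card T" by (rule card_mono[rotated]) (simp add: T_def)
    then show False using lt unfolding T_def by simp
  qed
  then obtain y where y: "y \<in> {1..n} - A" "y \<notin> T" by blast
  have cy: "c y \<noteq> col" using y unfolding T_def by auto
  have TA: "T \<inter> A = {j\<in>A. c j = col}" using s unfolding T_def by auto
  have "min (card {j\<in>A. c j} + (if c y then 1 else 0)) (card {j\<in>A. \<not> c j} + (if c y then 0 else 1)) = h"
    using ans y ans_insert[OF fA, of y c] by auto
  then show ?thesis using cy TA unfolding T_def[symmetric] by (cases col) (auto simp: min_def split: if_splits)
qed


lemma qs_valid:
  assumes "\<forall>A\<in>set F. A \<subseteq> {1..n} \<and> card A + 1 = k"
  shows "\<forall>Q\<in>set (qs_of n F). Q \<subseteq> {1..n} \<and> card Q = k"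
proof
  fix Q assume "Q \<in> set (qs_of n F)"
  then obtain A y where A: "A \<in> set F" "y \<in> {1..n}-A" "Q = insert y A" unfolding qs_of_mem by blast
  have fA: "finite A" using assms A(1) finite_subset[of A "{1..n::nat}"] by auto
  show "Q \<subseteq> {1..n} \<and> card Q = k" using A assms fA by auto
qed

lemma qs_len:
  assumes "\<forall>A\<in>set F. A \<subseteq> {1..n} \<and> card A + 1 = k" and "k \<le> n + 1"
  shows "length (qs_of n F) = length F * (n + 1 - k)"
  using assms
proof (induction F)
  case Nil then show ?case by (simp add: qs_of_def)
next
  case (Cons A F)
  have s: "A \<subseteq> {1..n}" "card A + 1 = k" using Cons.prems by auto
  have fA: "finite A" using s finite_subset[of A "{1..n::nat}"] by auto
  have "card ({1..n} - A) = n + 1 - k" using s fA by (simp add: card_Diff_subset)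
  then show ?case using Cons by (simp add: qs_of_length)
qed

lemma N_le:
  assumes "\<forall>A\<in>set F. A \<subseteq> {1..n} \<and> card A + 1 = k" and "k \<le> n + 1"
    and "cm_succeeds n (qs_of n F)"
  shows "N_CM k n \<le> length F * (n + 1 - k)"
  unfolding N_CM_def
  by (rule Least_le) (use qs_valid[OF assms(1)] qs_len[OF assms(1,2)] assms(3) in blast)

lemma aux_par: "(t::nat) = u + x \<Longrightarrow> u + v = 2*q \<Longrightarrow> u \<le> v+1 \<Longrightarrow> v \<le> u+1 \<Longrightarrow> t = q + x"
  by presburger

lemma noC_K:
  assumes "m = 2*q" "q \<ge> 1"
  shows "\<not> property_C ((\<lambda>j. {1..m+1} - {j}) ` {1..m+1})"
proof
  assume "property_C ((\<lambda>j. {1..m+1} - {j}) ` {1..m+1})"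
  then obtain c where c0: "\<forall>e\<in>(\<lambda>j. {1..m+1} - {j}) ` {1..m+1}. balanced_on c e"
    unfolding property_C_def by (elim exE) (rule that)
  have c: "\<forall>j\<in>{1..m+1}. balanced_on c ({1..m+1} - {j})"
  proof
    fix j assume "j \<in> {1..m+1}"
    then have "{1..m+1} - {j} \<in> (\<lambda>j. {1..m+1} - {j}) ` {1..m+1}" by (rule imageI)
    then show "balanced_on c ({1..m+1} - {j})" using c0 by (rule bspec[rotated])
  qed
  define K where "K = {1..m+1}"
  define t where "t = card {i\<in>K. c i}"
  have key: "t = q + (if c j then 1 else 0)" if j: "j \<in> K" for j
  proof -
    have fK: "finite (K - {j})" unfolding K_def by simp
    have nj: "j \<notin> K - {j}" by simp
    have f1: "t = card {i\<in>K-{j}. c i} + (if c j then 1 else 0)"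
    proof -
      have KK: "insert j (K - {j}) = K" using j by blast
      have "t = card {i \<in> insert j (K-{j}). c i}" unfolding KK t_def by (rule refl)
      then show ?thesis using card_insert_filter[OF fK nj, of c] by linarith
    qed
    have cK: "card (K - {j}) = m" using j unfolding K_def by simp
    have f2: "card {i\<in>K-{j}. c i} + card {i\<in>K-{j}. \<not> c i} = 2*q"
      by (simp only: card_split[OF fK] cK assms(1))
    have "balanced_on c (K - {j})" unfolding K_def by (rule bspec[OF c j[unfolded K_def]])
    then have f34: "card {i\<in>K-{j}. c i} \<le> card {i\<in>K-{j}. \<not> c i} + 1"
        "card {i\<in>K-{j}. \<not> c i} \<le> card {i\<in>K-{j}. c i} + 1"
      unfolding balanced_on_def by blast+
    show ?thesis by (rule aux_par[OF f1 f2 f34])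
  qed
  have one: "1 \<in> K" unfolding K_def by simp
  show False
  proof (cases "c 1")
    case True
    have "c j" if jK: "j \<in> K" for j
    proof (rule ccontr)
      assume "\<not> c j"
      then have "t = q" using key[OF jK] by simp
      moreover have "t = q + 1" using key[OF one] True by simp
      ultimately show False by simp
    qed
    then have e: "{i\<in>K. c i} = K" by auto
    have "t = card K" unfolding t_def e ..
    also have "card K = m + 1" unfolding K_def by simp
    finally have "t = m + 1" .
    moreover have "t = q + 1" using key[OF one] True by simp
    ultimately show False using assms by linarith
  next
    case False
    have "\<not> c j" if jK: "j \<in> K" for j
    proof
      assume "c j"
      then have "t = q + 1" using key[OF jK] by simp
      moreover have "t = q" using key[OF one] False by simp
      ultimately show False by simp
    qed
    then have e: "{i\<in>K. c i} = {}" by auto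
    have "t = 0" unfolding t_def e by simp
    moreover have "t = q" using key[OF one] False by simp
    ultimately show False using assms by linarith
  qed
qed

lemma dC_ex:
  assumes "m = 2*q" "q \<ge> 1" "m + 1 \<le> n"
  shows "\<exists>E. E \<subseteq> {e. e \<subseteq> {1..n} \<and> card e = m} \<and> card E = dC m n \<and> \<not> property_C E"
  unfolding dC_def
proof (rule LeastI_ex)
  show "\<exists>x E. E \<subseteq> {e. e \<subseteq> {1..n} \<and> card e = m} \<and> card E = x \<and> \<not> property_C E"
  proof (intro exI conjI)
    show "(\<lambda>j. {1..m+1} - {j}) ` {1..m+1} \<subseteq> {e. e \<subseteq> {1..n} \<and> card e = m}"
      using assms(3) by auto
    show "\<not> property_C ((\<lambda>j. {1..m+1} - {j}) ` {1..m+1})" by (rule noC_K[OF assms(1,2)])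
  qed simp
qed

lemma propC_small:
  assumes "E \<subseteq> {e. e \<subseteq> {1..n} \<and> card e = 2}" "card E \<le> 1"
  shows "property_C E"
proof -
  have fin: "finite E"
    by (rule finite_subset[OF assms(1)]) (rule finite_subset[of _ "Pow {1..n}"], auto)
  show ?thesis
  proof (cases "E = {}")
    case True then show ?thesis unfolding property_C_def by simp
  next
    case False
    have "card E > 0" using False fin by (simp add: card_gt_0_iff)
    then have "card E = 1" using assms(2) by simp
    then obtain e where "E = {e}" by (rule card_1_singletonE)
    then have "card e = 2" using assms(1) by auto
    then obtain a b where ab: "e = {a,b}" "a \<noteq> b" by (meson card_2_iff)
    have "balanced_on (\<lambda>j. j = a) e"
    proof -
      have "{j\<in>e. j = a} = {a}" "{j\<in>e. j \<noteq> a} = {b}" using ab by auto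
      then show ?thesis unfolding balanced_on_def by simp
    qed
    then show ?thesis unfolding property_C_def using \<open>E = {e}\<close> by blast
  qed
qed

lemma strict_pair: "a \<noteq> b \<Longrightarrow> strict c {a, b} \<longleftrightarrow> c a = c b"
proof -
  assume ab: "a \<noteq> b"
  show ?thesis
  proof (cases "c a"; cases "c b")
    assume "c a" "c b"
    then have e1: "{j\<in>{a,b}. c j} = {a,b}" and e2: "{j\<in>{a,b}. \<not> c j} = {}" by auto
    show ?thesis unfolding strict_def e1 e2 using ab \<open>c a\<close> \<open>c b\<close> by simp
  next
    assume "c a" "\<not> c b"
    then have e1: "{j\<in>{a,b}. c j} = {a}" and e2: "{j\<in>{a,b}. \<not> c j} = {b}" using ab by auto
    show ?thesis unfolding strict_def e1 e2 using \<open>c a\<close> \<open>\<not> c b\<close> by simp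
  next
    assume "\<not> c a" "c b"
    then have e1: "{j\<in>{a,b}. c j} = {b}" and e2: "{j\<in>{a,b}. \<not> c j} = {a}" using ab by auto
    show ?thesis unfolding strict_def e1 e2 using \<open>\<not> c a\<close> \<open>c b\<close> by simp
  next
    assume "\<not> c a" "\<not> c b"
    then have e1: "{j\<in>{a,b}. c j} = {}" and e2: "{j\<in>{a,b}. \<not> c j} = {a,b}" by auto
    show ?thesis unfolding strict_def e1 e2 using ab \<open>\<not> c a\<close> \<open>\<not> c b\<close> by simp
  qed
qed


lemma strict_of_not_bal: "\<not> balanced_on c A \<Longrightarrow> strict c A"
  unfolding balanced_on_def strict_def by auto

lemma card_compl_nat:
  "card {j\<in>{1..n::nat}. \<not> P j} = n - card {j\<in>{1..n}. P j}"
  using card_split[of "{1..n::nat}" P] by simp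

theorem theorem6:
  fixes k n :: nat
  assumes "k \<ge> 2" and "2 * k - 1 \<le> n"
  shows "N_CM k n \<le> (if even k then n - k + 1 else (n - k + 1) * (1 + dC (k - 1) n))"
proof (cases "even k")
  case True
  define A where "A = {1..k-1}"
  have Av: "\<forall>B\<in>set [A]. B \<subseteq> {1..n} \<and> card B + 1 = k" using assms by (auto simp: A_def)
  have succ: "cm_succeeds n (qs_of n [A])"
  proof (rule G)
    show "\<forall>B\<in>set [A]. B \<subseteq> {1..n} \<and> 2 * card B < n" using assms by (auto simp: A_def)
    have "strict c' A" for c'
    proof -
      have "card {j\<in>A. c' j} + card {j\<in>A. \<not> c' j} = k - 1"
        using card_split[of A c'] unfolding A_def by simp
      moreover have "odd (k - 1)" using True assms(1) by simp
      ultimately show ?thesis unfolding strict_def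
      proof (intro notI)
        assume s1: "card {j\<in>A. c' j} + card {j\<in>A. \<not> c' j} = k - 1" and o: "odd (k - 1)"
          and eq: "card {j\<in>A. c' j} = card {j\<in>A. \<not> c' j}"
        have "k - 1 = 2 * card {j\<in>A. \<not> c' j}" using s1 eq by simp
        then show False using o by simp
      qed
    qed
    then show "\<forall>c. (\<exists>B\<in>set [A]. \<forall>c'. cm_consistent (qs_of n [A]) c c' \<longrightarrow> strict c' B)
               \<or> (\<exists>i\<in>{1..n}. \<forall>c'. cm_consistent (qs_of n [A]) c c' \<longrightarrow> majority_ball n c' i)"
      by auto
  qed
  have "N_CM k n \<le> length [A] * (n + 1 - k)" by (rule N_le[OF Av _ succ]) (use assms in simp)
  then show ?thesis using True by simp
next
  case False
  then obtain h where k: "k = 2*h+1" using oddE by blast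
  have h1: "h \<ge> 1" using assms(1) k by simp
  have hn: "4*h < n" using assms(2) k by simp
  obtain E where E: "E \<subseteq> {e. e \<subseteq> {1..n} \<and> card e = 2*h}" "card E = dC (k-1) n" "\<not> property_C E"
    using dC_ex[of "k-1" h n] k h1 hn by auto
  have finE: "finite E"
    by (rule finite_subset[OF E(1)]) (rule finite_subset[of _ "Pow {1..n}"], auto)
  obtain Es where Es: "set Es = E" "distinct Es" using finite_distinct_list[OF finE] by blast
  have lenEs: "length Es = dC (k-1) n" using Es E(2) distinct_card by fastforce
  show ?thesis
  proof (cases "h = 1")
    case True
    define F where "F = [{1,2},{1,3},{2::nat,3}]"
    have Fv: "\<forall>A\<in>set F. A \<subseteq> {1..n} \<and> card A = 2*h" using True hn unfolding F_def by auto
    have d2: "dC (k-1) n \<ge> 2"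
    proof (rule ccontr)
      assume "\<not> dC (k-1) n \<ge> 2"
      then have "card E \<le> 1" using E(2) by simp
      then have "property_C E" using propC_small[of E n] E(1) True by simp
      then show False using E(3) by simp
    qed
    have succ: "cm_succeeds n (qs_of n F)"
    proof (rule Odd[OF Fv hn])
      show "\<exists>i\<in>{1..n}. \<forall>c. (\<forall>A\<in>set F. \<forall>y\<in>{1..n}-A. cm_answer c (insert y A) = h) \<longrightarrow> majority_ball n c i"
      proof (intro bexI allI impI)
        show "(4::nat) \<in> {1..n}" using hn True by simp
        fix c assume all: "\<forall>A\<in>set F. \<forall>y\<in>{1..n}-A. cm_answer c (insert y A) = h"
        have "\<exists>A\<in>set F. strict c A"
        proof (rule ccontr)
          assume "\<not> (\<exists>A\<in>set F. strict c A)"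
          then have "\<not> strict c {1,2}" "\<not> strict c {1,3}" "\<not> strict c {2,3}" unfolding F_def by auto
          then show False using strict_pair[of 1 2 c] strict_pair[of 1 3 c] strict_pair[of 2 3 c] by auto
        qed
        then obtain A where A: "A \<in> set F" "strict c A" by blast
        have As: "A \<subseteq> {1..3}" using A(1) unfolding F_def by auto
        have "\<exists>col. card {j\<in>{1..n}. c j = col} = h+1 \<and> {j\<in>{1..n}. c j = col} \<subseteq> A"
          using K[of A n h c] Fv A all hn by auto
        then obtain col where col0: "card {j\<in>{1..n}. c j = col} = h+1" "{j\<in>{1..n}. c j = col} \<subseteq> A"
          by blast
        have col: "card {j\<in>{1..n}. c j = col} = 2" "{j\<in>{1..n}. c j = col} \<subseteq> A"
          using col0 True by simp_all
        have "c 4 \<noteq> col"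
        proof
          assume "c 4 = col"
          then have "4 \<in> {j\<in>{1..n}. c j = col}" using hn True by simp
          then have "4 \<in> A" using col(2) by blast
          then show False using As by auto
        qed
        then have "{j\<in>{1..n}. c j = c 4} = {j\<in>{1..n}. \<not> (c j = col)}" by auto
        then have "card {j\<in>{1..n}. c j = c 4} = n - 2"
          using card_compl_nat[of n "\<lambda>j. c j = col"] col(1) by simp
        then show "majority_ball n c 4" unfolding majority_ball_def using hn True by simp
      qed
    qed
    have Fv': "\<forall>A\<in>set F. A \<subseteq> {1..n} \<and> card A + 1 = k" using Fv k by auto
    have "N_CM k n \<le> length F * (n + 1 - k)" by (rule N_le[OF Fv' _ succ]) (use hn k in simp)
    also have "\<dots> = 3 * (n - k + 1)" unfolding F_def using hn k by simp
    also have "\<dots> \<le> (n - k + 1) * (1 + dC (k - 1) n)"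
      by (subst mult.commute) (rule mult_le_mono2, use d2 in simp)
    finally show ?thesis using False by simp
  next
    case h2: False
    have "E \<noteq> {}" using E(3) unfolding property_C_def by auto
    then obtain A0 where A0: "A0 \<in> E" by blast
    have A0s: "A0 \<subseteq> {1..n}" "card A0 = 2*h" using A0 E(1) by auto
    have fA0: "finite A0" using A0s(1) finite_subset by blast
    have cS0: "card ({1..n} - A0) = n - 2*h" using A0s fA0 by (simp add: card_Diff_subset)
    have "2*h \<le> card ({1..n} - A0)" using cS0 hn by simp
    then obtain D where D: "D \<subseteq> {1..n} - A0" "card D = 2*h"
      by (rule obtain_subset_with_card_n)
    define F where "F = Es @ [D]"
    have Fv: "\<forall>A\<in>set F. A \<subseteq> {1..n} \<and> card A = 2*h" using D E(1) Es(1) unfolding F_def by auto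
    have succ: "cm_succeeds n (qs_of n F)"
    proof (rule Odd[OF Fv hn])
      show "\<exists>i\<in>{1..n}. \<forall>c. (\<forall>A\<in>set F. \<forall>y\<in>{1..n}-A. cm_answer c (insert y A) = h) \<longrightarrow> majority_ball n c i"
      proof (intro bexI allI impI)
        show "(1::nat) \<in> {1..n}" using hn by simp
        fix c assume all: "\<forall>A\<in>set F. \<forall>y\<in>{1..n}-A. cm_answer c (insert y A) = h"
        obtain A1 where A1: "A1 \<in> E" "\<not> balanced_on c A1" using E(3) unfolding property_C_def by blast
        have A1F: "A1 \<in> set F" using A1 Es unfolding F_def by simp
        have "\<exists>col. card {j\<in>{1..n}. c j = col} = h+1 \<and> {j\<in>{1..n}. c j = col} \<subseteq> A1"
          using K[of A1 n h c] Fv A1F all hn strict_of_not_bal[OF A1(2)] by auto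
        then obtain col where col: "card {j\<in>{1..n}. c j = col} = h+1" by blast
        define T where "T = {j\<in>{1..n}. c j = col}"
        have cT: "card T = h + 1" using col T_def by simp
        have A0F: "A0 \<in> set F" using A0 Es unfolding F_def by simp
        have DF: "D \<in> set F" unfolding F_def by simp
        have j1: "h \<le> card (T \<inter> A0)" unfolding T_def
          by (rule J) (use A0s all A0F col cS0 hn h1 in auto)
        have fD: "finite D" using D(1) finite_subset by blast
        have Ds: "D \<subseteq> {1..n}" using D(1) by auto
        have cSD: "card ({1..n} - D) = n - 2*h" using Ds D(2) fD by (simp add: card_Diff_subset)
        have j2: "h \<le> card (T \<inter> D)" unfolding T_def
          by (rule J) (use Ds all DF col cSD hn h1 in auto)
        have fT: "finite T" unfolding T_def by simp
        have "card (T \<inter> A0) + card (T \<inter> D) = card ((T \<inter> A0) \<union> (T \<inter> D))"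
          by (rule card_Un_disjoint[symmetric]) (use fT D(1) in auto)
        also have "\<dots> \<le> card T" by (rule card_mono[OF fT]) auto
        finally have "2*h \<le> h + 1" using j1 j2 cT by simp
        then show "majority_ball n c 1" using h2 h1 by simp
      qed
    qed
    have Fv': "\<forall>A\<in>set F. A \<subseteq> {1..n} \<and> card A + 1 = k" using Fv k by auto
    have "N_CM k n \<le> length F * (n + 1 - k)" by (rule N_le[OF Fv' _ succ]) (use hn k in simp)
    also have "\<dots> = (n - k + 1) * (1 + dC (k - 1) n)"
    proof -
      have l: "length F = 1 + dC (k - 1) n" unfolding F_def using lenEs by simp
      have m: "n + 1 - k = n - k + 1" using hn k by simp
      show ?thesis unfolding l m by (rule mult.commute)
    qed
    finally show ?thesis using False by simp
  qed
qed

end
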